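(* A formal power series $\varphi(x)\in\mathbb{C}[[x]]$ is symplectic if and only if there exists a formal power series $\rho(y)\in\mathbb{C}[[y]]$ such that $\varphi(x)=\rho\big(x^2/(1-x)\big)$ (formal composition).
   Context: A formal power series $\varphi(x)=\sum_{i\ge0}\gamma_i x^i\in\mathbb{C}[[x]]$ is called symplectic if for every $m\ge1$ one has $\sum_{k=0}^{m-1}(-1)^k\binom{m-1}{k}\gamma_{m+k}=0$. Here $x^2/(1-x)=\sum_{j\ge2}x^j$ has zero constant term, so the composite is a well-defined formal power series. *)

theory Defs
  imports "HOL-Computational_Algebra.Formal_Power_Series" Complex_Main
begin

definition symplectic_fps :: "complex fps \<Rightarrow> bool" where
  "symplectic_fps f \<longleftrightarrow>
     (\<forall>m::nat. m \<ge> 1 \<longrightarrow>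
        (\<Sum>k = 0..m - 1. (-1) ^ k * of_nat ((m - 1) choose k) * fps_nth f (m + k)) = 0)"

end

theory Submission imports Defs begin
unbundle fps_syntax

definition Vf :: "complex fps" where "Vf = inverse (1 - fps_X)"
definition Uf :: "complex fps" where "Uf = fps_X ^ 2 / (1 - fps_X)"

lemma Vf_mult: "Vf * (1 - fps_X) = 1"
  unfolding Vf_def by auto

lemma Uf_eq: "Uf = fps_X^2 * Vf"
  unfolding Uf_def Vf_def by (rule fps_divide_unit) simp

lemma Uf_pow: "Uf ^ j = fps_X ^ (2*j) * Vf ^ j"
  by (simp add: Uf_eq power_mult_distrib power_mult)

lemma Uf_pow_low: "n < 2*j \<Longrightarrow> (Uf ^ j) $ n = 0"
  by (simp add: Uf_pow fps_X_power_mult_nth)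

lemma Vf_0: "Vf $ 0 = 1"
  unfolding Vf_def by simp

lemma Uf_pow_diag: "(Uf ^ j) $ (2*j) = 1"
  by (simp add: Uf_pow fps_X_power_mult_nth Vf_0 fps_nth_power_0)

lemma omx_nth: "((1 - fps_X) ^ n :: complex fps) $ i = (-1) ^ i * of_nat (n choose i)"
proof (induction n arbitrary: i)
  case 0
  then show ?case by (cases i) auto
next
  case (Suc n)
  have e: "(1 - fps_X) ^ Suc n = (1 - fps_X) ^ n - fps_X * (1 - fps_X :: complex fps) ^ n"
    by (simp add: algebra_simps)
  show ?case
  proof (cases i)
    case 0
    then show ?thesis using Suc by (simp add: e)
  next
    case (Suc j)
    then show ?thesis using Suc.IH by (simp add: e algebra_simps)
  qed
qed

lemma omx_high: "n < i \<Longrightarrow> ((1 - fps_X) ^ n :: complex fps) $ i = 0"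
  by (simp add: omx_nth)

lemma key: "((1 - fps_X) ^ n * Uf ^ j) $ (2*n+1) = 0"
proof (cases "n < j")
  case True
  have eq: "(1 - fps_X) ^ n * Uf ^ j = fps_X ^ (2*j) * ((1 - fps_X) ^ n * Vf ^ j)"
    by (simp add: Uf_pow algebra_simps)
  show ?thesis unfolding eq using True by (simp add: fps_X_power_mult_nth)
next
  case False
  have "(1 - fps_X) ^ n * Vf ^ j = (1 - fps_X) ^ (n - j) * (Vf * (1 - fps_X)) ^ j"
  proof -
    have "n = (n - j) + j" using False by simp
    then have "(1 - fps_X :: complex fps) ^ n = (1 - fps_X) ^ (n - j) * (1 - fps_X) ^ j"
      by (metis power_add)
    then show ?thesis by (simp add: power_mult_distrib mult_ac)
  qed
  also have "\<dots> = (1 - fps_X) ^ (n - j)" by (simp add: Vf_mult)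
  finally have "(1 - fps_X) ^ n * Uf ^ j = fps_X ^ (2*j) * (1 - fps_X) ^ (n - j)"
    by (simp add: Uf_pow algebra_simps)
  then show ?thesis using False by (simp add: fps_X_power_mult_nth omx_high)
qed

definition Lf :: "nat \<Rightarrow> complex fps \<Rightarrow> complex" where
  "Lf m f = (\<Sum>k = 0..m - 1. (-1) ^ k * of_nat ((m - 1) choose k) * fps_nth f (m + k))"

lemma sympl_iff: "symplectic_fps f \<longleftrightarrow> (\<forall>m\<ge>1. Lf m f = 0)"
  unfolding symplectic_fps_def Lf_def by simp

lemma term_eq:
  assumes "k \<le> n"
  shows "(-1) ^ n * ((-1 :: complex) ^ (n - k) * of_nat (n choose (n - k)) * f $ (2*n+1 - (n - k)))
       = (-1) ^ k * of_nat (n choose k) * f $ (Suc n + k)"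
proof -
  have n: "n = k + (n - k)" using assms by simp
  have "(-1 :: complex) ^ n * (-1) ^ (n - k) = (-1) ^ k * ((-1) ^ (n - k) * (-1) ^ (n - k))"
    by (subst n) (simp add: power_add)
  also have "\<dots> = (-1) ^ k" by (simp flip: power_add)
  finally have s: "(-1 :: complex) ^ n * (-1) ^ (n - k) = (-1) ^ k" .
  have i: "2*n+1 - (n - k) = Suc n + k" using assms by simp
  have c: "n choose (n - k) = n choose k" using assms by (simp add: binomial_symmetric[symmetric])
  show ?thesis unfolding i c mult.assoc[symmetric] s ..
qed

lemma Lf_trans: "Lf (Suc n) f = (-1) ^ n * ((1 - fps_X) ^ n * f) $ (2*n+1)"
proof -
  have "((1 - fps_X) ^ n * f) $ (2*n+1) = (\<Sum>i=0..2*n+1. (-1) ^ i * of_nat (n choose i) * f $ (2*n+1 - i))"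
    by (simp add: fps_mult_nth omx_nth)
  also have "\<dots> = (\<Sum>i=0..n. (-1) ^ i * of_nat (n choose i) * f $ (2*n+1 - i))"
    by (rule sum.mono_neutral_right) auto
  also have "\<dots> = (\<Sum>i=0..n. (-1) ^ (n - i) * of_nat (n choose (n - i)) * f $ (2*n+1 - (n - i)))"
    by (subst sum.atLeastAtMost_rev) simp
  finally have "(-1) ^ n * ((1 - fps_X) ^ n * f) $ (2*n+1) =
     (\<Sum>i=0..n. (-1) ^ n * ((-1) ^ (n - i) * of_nat (n choose (n - i)) * f $ (2*n+1 - (n - i))))"
    by (simp add: sum_distrib_left)
  also have "\<dots> = (\<Sum>i=0..n. (-1) ^ i * of_nat (n choose i) * f $ (Suc n + i))"
    by (rule sum.cong[OF refl], rule term_eq) simp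
  finally show ?thesis by (simp add: Lf_def)
qed

lemma Lf_Upow: "m \<ge> 1 \<Longrightarrow> Lf m (Uf ^ j) = 0"
  using Lf_trans[of "m - 1" "Uf ^ j"] key[of "m - 1" j] by simp

lemma Lf_comp:
  assumes m: "m \<ge> 1"
  shows "Lf m (\<rho> oo Uf) = 0"
proof -
  define c where "c k = (-1) ^ k * (of_nat ((m - 1) choose k) :: complex)" for k
  have "Lf m (\<rho> oo Uf) = (\<Sum>k = 0..m - 1. c k * (\<Sum>i=0..m+k. \<rho> $ i * (Uf ^ i) $ (m + k)))"
    by (simp add: Lf_def c_def fps_compose_nth)
  also have "\<dots> = (\<Sum>k = 0..m - 1. c k * (\<Sum>i=0..2*m. \<rho> $ i * (Uf ^ i) $ (m + k)))"
  proof (rule sum.cong[OF refl])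
    fix k assume k: "k \<in> {0..m - 1}"
    have "(\<Sum>i=0..m+k. \<rho> $ i * (Uf ^ i) $ (m + k)) = (\<Sum>i=0..2*m. \<rho> $ i * (Uf ^ i) $ (m + k))"
      by (rule sum.mono_neutral_left) (use k m in \<open>auto intro!: Uf_pow_low\<close>)
    then show "c k * (\<Sum>i=0..m+k. \<rho> $ i * (Uf ^ i) $ (m + k)) = c k * (\<Sum>i=0..2*m. \<rho> $ i * (Uf ^ i) $ (m + k))"
      by simp
  qed
  also have "\<dots> = (\<Sum>i=0..2*m. \<rho> $ i * (\<Sum>k = 0..m - 1. c k * (Uf ^ i) $ (m + k)))"
    unfolding sum_distrib_left by (subst sum.swap) (simp add: mult_ac)
  also have "\<dots> = (\<Sum>i=0..2*m. \<rho> $ i * Lf m (Uf ^ i))"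
    by (simp add: Lf_def c_def)
  also have "\<dots> = 0" using m by (simp add: Lf_Upow)
  finally show ?thesis .
qed

primrec rl :: "complex fps \<Rightarrow> nat \<Rightarrow> complex list" where
  "rl \<phi> 0 = []"
| "rl \<phi> (Suc n) = rl \<phi> n @ [\<phi> $ (2*n) - (\<Sum>i<n. (rl \<phi> n ! i) * (Uf ^ i) $ (2*n))]"

lemma rl_length [simp]: "length (rl \<phi> n) = n"
  by (induction n) auto

lemma rl_stable: "i < n \<Longrightarrow> rl \<phi> (n + d) ! i = rl \<phi> n ! i"
  by (induction d) (auto simp: nth_append)

definition rho :: "complex fps \<Rightarrow> complex fps" where
  "rho \<phi> = Abs_fps (\<lambda>j. rl \<phi> (Suc j) ! j)"

lemma rho_nth: "i < n \<Longrightarrow> rho \<phi> $ i = rl \<phi> n ! i"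
  using rl_stable[of i "Suc i" \<phi> "n - Suc i"] by (simp add: rho_def)

lemma rho_even: "(rho \<phi> oo Uf) $ (2*j) = \<phi> $ (2*j)"
proof -
  have "(rho \<phi> oo Uf) $ (2*j) = (\<Sum>i=0..2*j. rho \<phi> $ i * (Uf ^ i) $ (2*j))"
    by (simp add: fps_compose_nth)
  also have "\<dots> = (\<Sum>i=0..j. rho \<phi> $ i * (Uf ^ i) $ (2*j))"
    by (rule sum.mono_neutral_right) (auto intro!: Uf_pow_low)
  also have "\<dots> = rho \<phi> $ j + (\<Sum>i<j. rho \<phi> $ i * (Uf ^ i) $ (2*j))"
    by (simp add: atLeast0AtMost lessThan_Suc_atMost[symmetric] Uf_pow_diag)
  also have "(\<Sum>i<j. rho \<phi> $ i * (Uf ^ i) $ (2*j)) = (\<Sum>i<j. rl \<phi> j ! i * (Uf ^ i) $ (2*j))"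
    by (rule sum.cong) (auto simp: rho_nth)
  also have "rho \<phi> $ j = rl \<phi> (Suc j) ! j" by (rule rho_nth) simp
  finally show ?thesis by (simp add: nth_append)
qed

lemma Lf_diff: "Lf m (f - g) = Lf m f - Lf m g"
  by (simp add: Lf_def algebra_simps sum_subtractf)

lemma zero_if: 
  assumes L: "\<And>m. m \<ge> 1 \<Longrightarrow> Lf m \<psi> = 0" and E: "\<And>j. \<psi> $ (2*j) = 0"
  shows "\<psi> $ n = 0"
proof (induction n rule: less_induct)
  case (less n)
  show ?case
  proof (cases "even n")
    case True then show ?thesis using E by (metis evenE)
  next
    case False
    then obtain p where n: "n = 2*p+1" by (metis oddE)
    have "0 = Lf (Suc p) \<psi>" using L[of "Suc p"] by simp
    also have "\<dots> = (\<Sum>k = 0..p. (-1) ^ k * of_nat (p choose k) * \<psi> $ (Suc p + k))"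
      by (simp add: Lf_def)
    also have "\<dots> = (\<Sum>k<p. (-1) ^ k * of_nat (p choose k) * \<psi> $ (Suc p + k)) + (-1)^p * \<psi> $ n"
      by (simp add: atLeast0AtMost lessThan_Suc_atMost[symmetric] n mult_2)
    also have "(\<Sum>k<p. (-1) ^ k * of_nat (p choose k) * \<psi> $ (Suc p + k)) = 0"
      by (rule sum.neutral) (auto simp: n less)
    finally show ?thesis by simp
  qed
qed

theorem proposition1p4:
  fixes \<phi> :: "complex fps"
  shows "symplectic_fps \<phi> \<longleftrightarrow>
         (\<exists>\<rho> :: complex fps. \<phi> = \<rho> oo (fps_X ^ 2 / (1 - fps_X)))"
proof
  assume S: "symplectic_fps \<phi>"
  define \<psi> where "\<psi> = \<phi> - (rho \<phi> oo Uf)"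
  have "\<psi> $ n = 0" for n
  proof (rule zero_if)
    fix m :: nat assume "m \<ge> 1"
    then show "Lf m \<psi> = 0" using S by (simp add: \<psi>_def Lf_diff Lf_comp sympl_iff)
  next
    fix j show "\<psi> $ (2*j) = 0" by (simp add: \<psi>_def rho_even)
  qed
  then have "\<phi> = rho \<phi> oo Uf" by (intro fps_ext) (simp add: \<psi>_def)
  then show "\<exists>\<rho> :: complex fps. \<phi> = \<rho> oo (fps_X ^ 2 / (1 - fps_X))"
    unfolding Uf_def by blast
next
  assume "\<exists>\<rho> :: complex fps. \<phi> = \<rho> oo (fps_X ^ 2 / (1 - fps_X))"
  then obtain \<rho> where "\<phi> = \<rho> oo Uf" unfolding Uf_def by blast
  then show "symplectic_fps \<phi>" by (simp add: sympl_iff Lf_comp)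
qed

end
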